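(* Let $\varepsilon>0$ and choose $\alpha$ with $0<\alpha\leq \varepsilon/(2M)$. If a pair $(x,s)\in\mathrm{dom}\, h\times\mathbb{R}^n$ satisfies $\phi^\alpha(x)+\psi^\alpha(s)\leq\varepsilon/2$, then $\phi(x)-\phi_*\leq \varepsilon$.
   Context: Let $\|\cdot\|$ be a norm on $\mathbb{R}^n$ with dual norm $\|\cdot\|_*$. Let $f:\mathbb{R}^n\to\mathbb{R}$ be convex, differentiable and $L$-smooth ($L>0$) with respect to $\|\cdot\|$, and let $h:\mathbb{R}^n\to(-\infty,\infty]$ be closed proper convex with bounded domain $\mathrm{dom}\, h$. Let $w:\mathbb{R}^n\to[0,+\infty]$ be non-negative, closed, and $1$-strongly convex with respect to $\|\cdot\|$ on $\mathrm{dom}\, h$, with $M:=\max_{x\in\mathrm{dom}\, h}w(x)<\infty$. Define $\phi=f+h$, $\phi_*=\min_{x\in\mathbb{R}^n}\phi(x)$, and for $\alpha>0$: $h^\alpha=h+\alpha w$, $\phi^\alpha=f+h^\alpha$, and $\psi^\alpha(z)=(h^\alpha)^*(-z)+f^*(z)$, where $g^*(y)=\sup_x\{\langle y,x\rangle-g(x)\}$ denotes the convex conjugate. *)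

theory Defs
  imports "HOL-Analysis.Analysis"
begin

definition is_norm :: "(real^'n \<Rightarrow> real) \<Rightarrow> bool" where
  "is_norm N \<longleftrightarrow> (\<forall>x. N x \<ge> 0) \<and> (\<forall>x. N x = 0 \<longleftrightarrow> x = 0) \<and>
     (\<forall>c x. N (c *\<^sub>R x) = \<bar>c\<bar> * N x) \<and> (\<forall>x y. N (x + y) \<le> N x + N y)"

definition dual_norm :: "(real^'n \<Rightarrow> real) \<Rightarrow> real^'n \<Rightarrow> real" where
  "dual_norm N y = (SUP x\<in>{x. N x \<le> 1}. y \<bullet> x)"

definition L_smooth :: "(real^'n \<Rightarrow> real) \<Rightarrow> real \<Rightarrow> (real^'n \<Rightarrow> real) \<Rightarrow> bool" where
  "L_smooth N L f \<longleftrightarrow> (\<exists>g. (\<forall>x. (f has_derivative (\<lambda>v. g x \<bullet> v)) (at x)) \<and>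
      (\<forall>x y. dual_norm N (g x - g y) \<le> L * N (x - y)))"

definition edom :: "('a \<Rightarrow> ereal) \<Rightarrow> 'a set" where
  "edom h = {x. h x < \<infinity>}"

definition econvex :: "(real^'n \<Rightarrow> ereal) \<Rightarrow> bool" where
  "econvex h \<longleftrightarrow> (\<forall>x y t. 0 \<le> t \<and> t \<le> 1 \<longrightarrow>
     h (t *\<^sub>R x + (1 - t) *\<^sub>R y) \<le> ereal t * h x + ereal (1 - t) * h y)"

definition eclosed :: "(real^'n \<Rightarrow> ereal) \<Rightarrow> bool" where
  "eclosed h \<longleftrightarrow> closed {(x, t::real). h x \<le> ereal t}"

definition eproper :: "(real^'n \<Rightarrow> ereal) \<Rightarrow> bool" where
  "eproper h \<longleftrightarrow> (\<forall>x. h x \<noteq> -\<infinity>) \<and> (\<exists>x. h x < \<infinity>)"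

text \<open>1-strong convexity w.r.t. N on a set D (sigma = 1).\<close>
definition strongly_convex_on_wrt :: "(real^'n \<Rightarrow> real) \<Rightarrow> (real^'n) set \<Rightarrow> (real^'n \<Rightarrow> ereal) \<Rightarrow> bool" where
  "strongly_convex_on_wrt N D w \<longleftrightarrow> (\<forall>x\<in>D. \<forall>y\<in>D. \<forall>t. 0 \<le> t \<and> t \<le> 1 \<longrightarrow>
     w (t *\<^sub>R x + (1 - t) *\<^sub>R y) \<le> ereal t * w x + ereal (1 - t) * w y
        - ereal (t * (1 - t) / 2 * (N (x - y))\<^sup>2))"

definition econj :: "(real^'n \<Rightarrow> ereal) \<Rightarrow> real^'n \<Rightarrow> ereal" where
  "econj g y = (SUP x. ereal (y \<bullet> x) - g x)"

end

theory Submission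
  imports Defs
begin

lemma econj_lb: "ereal (y \<bullet> z) - g z \<le> econj g y"
  unfolding econj_def by (rule SUP_upper) simp

theorem lemma2p1:
  fixes N :: "real^'n \<Rightarrow> real" and f :: "real^'n \<Rightarrow> real"
    and h w :: "real^'n \<Rightarrow> ereal" and L M \<epsilon> \<alpha> :: real
    and x s :: "real^'n"
  assumes norm: "is_norm N"
    and f_convex: "convex_on UNIV f" and f_diff: "\<forall>x. f differentiable (at x)"
    and L_pos: "L > 0" and f_smooth: "L_smooth N L f"
    and h_closed: "eclosed h" and h_proper: "eproper h" and h_convex: "econvex h"
    and h_bdd: "bounded (edom h)"
    and w_nonneg: "\<forall>x. w x \<ge> 0" and w_closed: "eclosed w"
    and w_sc: "strongly_convex_on_wrt N (edom h) w"
    and M_max: "\<exists>x0\<in>edom h. w x0 = ereal M" "\<forall>y\<in>edom h. w y \<le> ereal M"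
    and eps: "\<epsilon> > 0" and alpha: "0 < \<alpha>" "\<alpha> * (2 * M) \<le> \<epsilon>"
    and x_dom: "x \<in> edom h"
    and gap: "(ereal (f x) + (h x + ereal \<alpha> * w x))
              + (econj (\<lambda>y. h y + ereal \<alpha> * w y) (- s) + econj (\<lambda>y. ereal (f y)) s)
              \<le> ereal (\<epsilon> / 2)"
  shows "(ereal (f x) + h x) - (INF y. ereal (f y) + h y) \<le> ereal \<epsilon>"
proof -
  have realdom: "\<exists>a b. h z = ereal a \<and> w z = ereal b \<and> 0 \<le> b \<and> b \<le> M" if "z \<in> edom h" for z
  proof -
    have "h z \<noteq> -\<infinity>" using h_proper unfolding eproper_def by blast
    moreover have "h z < \<infinity>" using that unfolding edom_def by simp
    ultimately obtain a where a: "h z = ereal a" by (cases "h z") auto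
    have "0 \<le> w z" "w z \<le> ereal M" using w_nonneg M_max(2) that by auto
    then obtain b where "w z = ereal b" "0 \<le> b" "b \<le> M" by (cases "w z") auto
    with a show ?thesis by blast
  qed
  obtain hx wx where hx: "h x = ereal hx" and wx: "w x = ereal wx" "0 \<le> wx" "wx \<le> M"
    using realdom[OF x_dom] by blast
  define C1 where "C1 = econj (\<lambda>y. h y + ereal \<alpha> * w y) (- s)"
  define C2 where "C2 = econj (\<lambda>y. ereal (f y)) s"
  have C1x: "ereal ((- s) \<bullet> x - (hx + \<alpha> * wx)) \<le> C1"
    using econj_lb[of "-s" x "\<lambda>y. h y + ereal \<alpha> * w y"] unfolding C1_def by (simp add: hx wx add.assoc)
  have C2x: "ereal (s \<bullet> x - f x) \<le> C2"
    using econj_lb[of s x "\<lambda>y. ereal (f y)"] unfolding C2_def by simp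
  have g: "ereal (f x + hx + \<alpha> * wx) + (C1 + C2) \<le> ereal (\<epsilon> / 2)"
    using gap unfolding C1_def[symmetric] C2_def[symmetric] by (simp add: hx wx add.assoc)
  have "C1 \<noteq> -\<infinity>" using C1x by auto
  moreover have "C2 \<noteq> -\<infinity>" using C2x by auto
  moreover have "C1 \<noteq> \<infinity>" "C2 \<noteq> \<infinity>" using g C1x C2x by auto
  ultimately obtain c1 c2 where c1: "C1 = ereal c1" and c2: "C2 = ereal c2"
    by (cases C1; cases C2) auto
  have gr: "f x + hx + \<alpha> * wx + c1 + c2 \<le> \<epsilon> / 2" using g by (simp add: c1 c2)
  have M0: "0 \<le> M" using wx by linarith
  have key: "ereal (f x + hx - \<epsilon>) \<le> ereal (f y) + h y" for y
  proof (cases "y \<in> edom h")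
    case False
    then have "h y = \<infinity>" unfolding edom_def by simp
    then show ?thesis by simp
  next
    case True
    obtain hy wy where hy: "h y = ereal hy" and wy: "w y = ereal wy" "0 \<le> wy" "wy \<le> M"
      using realdom[OF True] by blast
    have a1: "(- s) \<bullet> y - (hy + \<alpha> * wy) \<le> c1"
      using econj_lb[of "-s" y "\<lambda>y. h y + ereal \<alpha> * w y"] unfolding C1_def[symmetric]
      by (simp add: hy wy c1)
    have a2: "s \<bullet> y - f y \<le> c2"
      using econj_lb[of s y "\<lambda>y. ereal (f y)"] unfolding C2_def[symmetric] by (simp add: c2)
    have "\<alpha> * wy \<le> \<alpha> * M" using wy alpha by (simp add: mult_left_mono)
    moreover have "0 \<le> \<alpha> * wx" using wx alpha by simp
    moreover have "(- s) \<bullet> y = - (s \<bullet> y)" by simp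
    ultimately have "f x + hx - \<epsilon> \<le> f y + hy" using a1 a2 gr alpha by linarith
    then show ?thesis by (simp add: hy)
  qed
  define I where "I = (INF y. ereal (f y) + h y)"
  have I1: "ereal (f x + hx - \<epsilon>) \<le> I" unfolding I_def by (rule INF_greatest) (rule key)
  have I2: "I \<le> ereal (f x + hx)" unfolding I_def using INF_lower[of x UNIV "\<lambda>y. ereal (f y) + h y"]
    by (simp add: hx)
  obtain i where i: "I = ereal i" using I1 I2 by (cases I) auto
  have "f x + hx - \<epsilon> \<le> i" using I1 i by simp
  then have "ereal (f x + hx) - I \<le> ereal \<epsilon>" using i by simp
  then show ?thesis unfolding I_def by (simp add: hx)
qed

end
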